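(* Let $u_0,\dots,u_4$ be pairwise distinct complex numbers with $M_i(U)\neq 0$ for all $i$, let $Y\subset\mathbb{P}^4=\mathrm{Proj}\,\mathbb{C}[v_0,\dots,v_4]$ be the quintic $\sum_iM_i(U)v_i^5=0$ (the Fermat quintic after a diagonal rescaling of coordinates), and let $\Lambda$ be the plane $\sum_iM_i(U)v_i=0,\ \sum_iM_i(U)u_i^4v_i=0$. Let $P=(1,1,1,1,1)$, $Q=(u_0,\dots,u_4)$ and $R=(l_0,\dots,l_4)$ be vectors spanning $\Lambda$, and use coordinates $[x:y:z]$ on $\Lambda$ for the point $xP+yQ+zR$. Define $S_{mn}$ by $\delta(U)S_{mn}=\sum_{i=0}^4M_i(U)u_i^ml_i^n$, and let $\alpha,\beta$ satisfy $S_{30}\alpha^2+2S_{31}\alpha+S_{32}=0$ and $S_{20}\beta^2+2S_{11}\beta+S_{02}=0$. Then the plane $\Lambda$ cuts $Y$ along a conic of the form $d z^2-(\beta x+\alpha y)z+xy=0$ and a cubic (possibly degenerate) passing through $P$ and $Q$ if and only if the following equations are satisfied for some parameter $d\in\mathbb{C}$: $10S_{03}+\beta g_2(P)-g_1(P)d=0$, $10S_{23}+\alpha g_2(Q)-g_1(Q)d=0$, $5S_{04}+\beta g_3-g_2(P)d=0$, $5S_{14}+\alpha g_3-g_2(Q)d=0$, $S_{05}-g_3d=0$, where $g_1(P)=20S_{11}+10S_{20}\beta$, $g_1(Q)=20S_{31}+10S_{30}\alpha$, $g_{1xy}=30S_{21}+10S_{20}\alpha+10S_{30}\beta$, $g_2(P)=30S_{12}+\alpha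 g_1(P)+\beta g_{1xy}-10S_{20}d$, $g_2(Q)=30S_{22}+\beta g_1(Q)+\alpha g_{1xy}-10S_{30}d$, $g_3=20S_{13}+\alpha g_2(P)+\beta g_2(Q)-dg_{1xy}$.
   Context: For $U=(u_0,\dots,u_4)$: $\delta(U)=\prod_{j>k}(u_j-u_k)$; for each $i$, $e_1(i),e_2(i),e_3(i)$ are the elementary symmetric polynomials in $\{u_j\}_{j\neq i}$; $d_i=\prod_{j,k\neq i,\,j>k}(u_j-u_k)$; $n_i=e_2(i)^2-e_1(i)e_3(i)$; $M_i(U)=(-1)^id_in_i$. These satisfy $\sum_iM_i(U)u_i^k=0$ for $k\in\{0,1,4,5\}$, so $P,Q\in Y\cap\Lambda$. The quantities $S_{mn}$ are polynomial in the $u_i$ and $l_i$; in particular $S_{20}=e_2$ and $S_{30}=e_3$ (elementary symmetric polynomials of $u_0,\dots,u_4$). *)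

theory Defs
  imports Complex_Main
begin

definition idx :: "nat set" where "idx = {..<5}"

definition delta :: "(nat \<Rightarrow> complex) \<Rightarrow> complex" where
  "delta u = (\<Prod>j\<in>idx. \<Prod>k\<in>{..<j}. (u j - u k))"

definition esym :: "nat \<Rightarrow> nat set \<Rightarrow> (nat \<Rightarrow> complex) \<Rightarrow> complex" where
  "esym r A u = (\<Sum>B\<in>{B. B \<subseteq> A \<and> card B = r}. \<Prod>j\<in>B. u j)"

definition e1 :: "(nat \<Rightarrow> complex) \<Rightarrow> nat \<Rightarrow> complex" where
  "e1 u i = esym 1 (idx - {i}) u"
definition e2 :: "(nat \<Rightarrow> complex) \<Rightarrow> nat \<Rightarrow> complex" where
  "e2 u i = esym 2 (idx - {i}) u"
definition e3 :: "(nat \<Rightarrow> complex) \<Rightarrow> nat \<Rightarrow> complex" where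
  "e3 u i = esym 3 (idx - {i}) u"

definition dd :: "(nat \<Rightarrow> complex) \<Rightarrow> nat \<Rightarrow> complex" where
  "dd u i = (\<Prod>j\<in>idx - {i}. \<Prod>k\<in>{..<j} - {i}. (u j - u k))"

definition nn :: "(nat \<Rightarrow> complex) \<Rightarrow> nat \<Rightarrow> complex" where
  "nn u i = (e2 u i)^2 - e1 u i * e3 u i"

definition MM :: "(nat \<Rightarrow> complex) \<Rightarrow> nat \<Rightarrow> complex" where
  "MM u i = (-1)^i * dd u i * nn u i"

definition SS :: "(nat \<Rightarrow> complex) \<Rightarrow> (nat \<Rightarrow> complex) \<Rightarrow> nat \<Rightarrow> nat \<Rightarrow> complex" where
  "SS u l m n = (\<Sum>i\<in>idx. MM u i * u i ^ m * l i ^ n) / delta u"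

text \<open>The quintic form of Y restricted to Lambda, in coordinates [x:y:z] for xP+yQ+zR.\<close>
definition quintic_on_plane ::
  "(nat \<Rightarrow> complex) \<Rightarrow> (nat \<Rightarrow> complex) \<Rightarrow> complex \<Rightarrow> complex \<Rightarrow> complex \<Rightarrow> complex" where
  "quintic_on_plane u l x y z = (\<Sum>i\<in>idx. MM u i * (x + y * u i + z * l i) ^ 5)"

definition cubic_form :: "(nat \<Rightarrow> nat \<Rightarrow> complex) \<Rightarrow> complex \<Rightarrow> complex \<Rightarrow> complex \<Rightarrow> complex" where
  "cubic_form c x y z = (\<Sum>(a,b)\<in>{(a,b). a + b \<le> 3}. c a b * x ^ a * y ^ b * z ^ (3 - a - b))"

definition conic :: "complex \<Rightarrow> complex \<Rightarrow> complex \<Rightarrow> complex \<Rightarrow> complex \<Rightarrow> complex \<Rightarrow> complex" where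
  "conic d \<alpha> \<beta> x y z = d * z^2 - (\<beta> * x + \<alpha> * y) * z + x * y"

definition g1P where "g1P u l \<alpha> \<beta> = 20 * SS u l 1 1 + 10 * SS u l 2 0 * \<beta>"
definition g1Q where "g1Q u l \<alpha> \<beta> = 20 * SS u l 3 1 + 10 * SS u l 3 0 * \<alpha>"
definition g1xy where "g1xy u l \<alpha> \<beta> = 30 * SS u l 2 1 + 10 * SS u l 2 0 * \<alpha> + 10 * SS u l 3 0 * \<beta>"
definition g2P where "g2P u l \<alpha> \<beta> d =
  30 * SS u l 1 2 + \<alpha> * g1P u l \<alpha> \<beta> + \<beta> * g1xy u l \<alpha> \<beta> - 10 * SS u l 2 0 * d"
definition g2Q where "g2Q u l \<alpha> \<beta> d =
  30 * SS u l 2 2 + \<beta> * g1Q u l \<alpha> \<beta> + \<alpha> * g1xy u l \<alpha> \<beta> - 10 * SS u l 3 0 * d"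
definition g3 where "g3 u l \<alpha> \<beta> d =
  20 * SS u l 1 3 + \<alpha> * g2P u l \<alpha> \<beta> d + \<beta> * g2Q u l \<alpha> \<beta> d - d * g1xy u l \<alpha> \<beta>"

definition conic_eqns :: "(nat \<Rightarrow> complex) \<Rightarrow> (nat \<Rightarrow> complex) \<Rightarrow> complex \<Rightarrow> complex \<Rightarrow> complex \<Rightarrow> bool" where
  "conic_eqns u l \<alpha> \<beta> d \<longleftrightarrow>
     10 * SS u l 0 3 + \<beta> * g2P u l \<alpha> \<beta> d - g1P u l \<alpha> \<beta> * d = 0 \<and>
     10 * SS u l 2 3 + \<alpha> * g2Q u l \<alpha> \<beta> d - g1Q u l \<alpha> \<beta> * d = 0 \<and>
     5 * SS u l 0 4 + \<beta> * g3 u l \<alpha> \<beta> d - g2P u l \<alpha> \<beta> d * d = 0 \<and>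
     5 * SS u l 1 4 + \<alpha> * g3 u l \<alpha> \<beta> d - g2Q u l \<alpha> \<beta> d * d = 0 \<and>
     SS u l 0 5 - g3 u l \<alpha> \<beta> d * d = 0"

end

theory Submission
  imports Defs
begin



lemma esym_empty: "esym r {} u = (if r = 0 then 1 else 0)"
proof (cases "r = 0")
  case True
  have eq: "{B. B \<subseteq> {} \<and> card B = r} = {{}}" using True by auto
  show ?thesis unfolding esym_def eq using True by simp
next
  case False
  have eq: "{B. B \<subseteq> {} \<and> card B = r} = {}" using False by auto
  show ?thesis unfolding esym_def eq using False by simp
qed

lemma esym_zero: "finite A \<Longrightarrow> esym 0 A u = 1"
proof -
  assume "finite A"
  hence "{B. B \<subseteq> A \<and> card B = 0} = {{}}" by (auto dest: finite_subset)
  thus ?thesis unfolding esym_def by simp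
qed

lemma esym_insert:
  assumes "finite A" "a \<notin> A"
  shows "esym (Suc r) (insert a A) u = esym (Suc r) A u + u a * esym r A u"
proof -
  let ?X = "{B. B \<subseteq> A \<and> card B = Suc r}"
  let ?Y = "{B. B \<subseteq> A \<and> card B = r}"
  have split: "{B. B \<subseteq> insert a A \<and> card B = Suc r} = ?X \<union> insert a ` ?Y"
  proof (rule set_eqI, rule iffI)
    fix B assume B: "B \<in> {B. B \<subseteq> insert a A \<and> card B = Suc r}"
    show "B \<in> ?X \<union> insert a ` ?Y"
    proof (cases "a \<in> B")
      case True
      have fin: "finite B" using B assms(1) by (auto dest: finite_subset)
      have "B = insert a (B - {a})" using True by auto
      moreover have "B - {a} \<in> ?Y" using B True fin by auto
      ultimately show ?thesis by blast
    next
      case False thus ?thesis using B by auto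
    qed
  next
    fix B assume "B \<in> ?X \<union> insert a ` ?Y"
    then show "B \<in> {B. B \<subseteq> insert a A \<and> card B = Suc r}"
    proof
      assume "B \<in> ?X" thus ?thesis by auto
    next
      assume "B \<in> insert a ` ?Y"
      then obtain C where C: "C \<subseteq> A" "card C = r" "B = insert a C" by auto
      have "finite C" using C assms(1) by (auto dest: finite_subset)
      moreover have "a \<notin> C" using C assms by auto
      ultimately show ?thesis using C by auto
    qed
  qed
  have finX: "finite ?X" using assms(1) by (auto intro: finite_subset[of _ "Pow A"])
  have finY: "finite ?Y" using assms(1) by (auto intro: finite_subset[of _ "Pow A"])
  have disj: "?X \<inter> insert a ` ?Y = {}" using assms by auto
  have inj: "inj_on (insert a) ?Y" unfolding inj_on_def using assms by (metis (no_types, lifting) Diff_insert_absorb mem_Collect_eq subsetD)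
  have "esym (Suc r) (insert a A) u = (\<Sum>B\<in>?X. \<Prod>j\<in>B. u j) + (\<Sum>B\<in>insert a ` ?Y. \<Prod>j\<in>B. u j)"
    unfolding esym_def split by (rule sum.union_disjoint) (use finX finY disj in auto)
  also have "(\<Sum>B\<in>insert a ` ?Y. \<Prod>j\<in>B. u j) = (\<Sum>B\<in>?Y. \<Prod>j\<in>insert a B. u j)"
    by (subst sum.reindex[OF inj]) simp
  also have "\<dots> = (\<Sum>B\<in>?Y. u a * (\<Prod>j\<in>B. u j))"
  proof (rule sum.cong[OF refl])
    fix B assume "B \<in> ?Y"
    hence "finite B" "a \<notin> B" using assms by (auto dest: finite_subset)
    thus "(\<Prod>j\<in>insert a B. u j) = u a * (\<Prod>j\<in>B. u j)" by simp
  qed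
  finally show ?thesis unfolding esym_def by (simp add: sum_distrib_left)
qed

lemma idx_eq: "idx = {0,1,2,3,4}" unfolding idx_def by (auto simp: eval_nat_numeral)

lemma e_0: "e1 u 0 = u 1 + u 2 + u 3 + u 4"
  "e2 u 0 = u 1 * u 2 + u 1 * u 3 + u 1 * u 4 + u 2 * u 3 + u 2 * u 4 + u 3 * u 4"
  "e3 u 0 = u 1 * u 2 * u 3 + u 1 * u 2 * u 4 + u 1 * u 3 * u 4 + u 2 * u 3 * u 4"
  unfolding e1_def e2_def e3_def idx_eq
  by (simp_all add: esym_insert esym_zero esym_empty insert_Diff_if eval_nat_numeral algebra_simps)

lemma dd0: "dd u 0 = (u 2 - u 1) * (u 3 - u 1) * (u 3 - u 2) * (u 4 - u 1) * (u 4 - u 2) * (u 4 - u 3)"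
  unfolding dd_def idx_eq
  by (simp add: eval_nat_numeral lessThan_Suc insert_Diff_if algebra_simps)



lemma dd_expl: "dd u 0 = (u 2 - u 1) * (u 3 - u 1) * (u 3 - u 2) * (u 4 - u 1) * (u 4 - u 2) * (u 4 - u 3)"
  "dd u 1 = (u 2 - u 0) * (u 3 - u 0) * (u 3 - u 2) * (u 4 - u 0) * (u 4 - u 2) * (u 4 - u 3)"
  "dd u 2 = (u 1 - u 0) * (u 3 - u 0) * (u 3 - u 1) * (u 4 - u 0) * (u 4 - u 1) * (u 4 - u 3)"
  "dd u 3 = (u 1 - u 0) * (u 2 - u 0) * (u 2 - u 1) * (u 4 - u 0) * (u 4 - u 1) * (u 4 - u 2)"
  "dd u 4 = (u 1 - u 0) * (u 2 - u 0) * (u 2 - u 1) * (u 3 - u 0) * (u 3 - u 1) * (u 3 - u 2)"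
  unfolding dd_def idx_eq
  by (simp_all add: eval_nat_numeral lessThan_Suc insert_Diff_if algebra_simps)

lemma V0: fixes a b c d e :: complex
  shows "((c - b) * (d - b) * (d - c) * (e - b) * (e - c) * (e - d)) * a^0
   - ((c - a) * (d - a) * (d - c) * (e - a) * (e - c) * (e - d)) * b^0
   + ((b - a) * (d - a) * (d - b) * (e - a) * (e - b) * (e - d)) * c^0
   - ((b - a) * (c - a) * (c - b) * (e - a) * (e - b) * (e - c)) * d^0
   + ((b - a) * (c - a) * (c - b) * (d - a) * (d - b) * (d - c)) * e^0 = 0"
  by algebra

lemma V1: fixes a b c d e :: complex
  shows "((c - b) * (d - b) * (d - c) * (e - b) * (e - c) * (e - d)) * a^1
   - ((c - a) * (d - a) * (d - c) * (e - a) * (e - c) * (e - d)) * b^1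
   + ((b - a) * (d - a) * (d - b) * (e - a) * (e - b) * (e - d)) * c^1
   - ((b - a) * (c - a) * (c - b) * (e - a) * (e - b) * (e - c)) * d^1
   + ((b - a) * (c - a) * (c - b) * (d - a) * (d - b) * (d - c)) * e^1 = 0"
  by algebra

lemma V2: fixes a b c d e :: complex
  shows "((c - b) * (d - b) * (d - c) * (e - b) * (e - c) * (e - d)) * a^2
   - ((c - a) * (d - a) * (d - c) * (e - a) * (e - c) * (e - d)) * b^2
   + ((b - a) * (d - a) * (d - b) * (e - a) * (e - b) * (e - d)) * c^2
   - ((b - a) * (c - a) * (c - b) * (e - a) * (e - b) * (e - c)) * d^2
   + ((b - a) * (c - a) * (c - b) * (d - a) * (d - b) * (d - c)) * e^2 = 0"
  by algebra

lemma V3: fixes a b c d e :: complex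
  shows "((c - b) * (d - b) * (d - c) * (e - b) * (e - c) * (e - d)) * a^3
   - ((c - a) * (d - a) * (d - c) * (e - a) * (e - c) * (e - d)) * b^3
   + ((b - a) * (d - a) * (d - b) * (e - a) * (e - b) * (e - d)) * c^3
   - ((b - a) * (c - a) * (c - b) * (e - a) * (e - b) * (e - c)) * d^3
   + ((b - a) * (c - a) * (c - b) * (d - a) * (d - b) * (d - c)) * e^3 = 0"
  by algebra




definition "SE1 u = u 0 + u 1 + u 2 + u 3 + (u 4::complex)"
definition "SE2 u = u 0 * u 1 + u 0 * u 2 + u 0 * u 3 + u 0 * u 4 + u 1 * u 2 + u 1 * u 3 + u 1 * u 4 + u 2 * u 3 + u 2 * u 4 + u 3 * (u 4::complex)"
definition "SE3 u = u 0 * u 1 * u 2 + u 0 * u 1 * u 3 + u 0 * u 1 * u 4 + u 0 * u 2 * u 3 + u 0 * u 2 * u 4 + u 0 * u 3 * u 4 + u 1 * u 2 * u 3 + u 1 * u 2 * u 4 + u 1 * u 3 * u 4 + u 2 * u 3 * (u 4::complex)"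
definition "SE4 u = u 0 * u 1 * u 2 * u 3 + u 0 * u 1 * u 2 * u 4 + u 0 * u 1 * u 3 * u 4 + u 0 * u 2 * u 3 * u 4 + u 1 * u 2 * u 3 * (u 4::complex)"
definition "SE5 u = u 0 * u 1 * u 2 * u 3 * (u 4::complex)"

lemma e1_expl:
  assumes "(i::nat) < 5"
  shows "e1 u i = SE1 u - u i"
proof -
  have "i = 0 \<or> i = 1 \<or> i = 2 \<or> i = 3 \<or> i = 4" using assms by auto
  moreover have "e1 u 0 = SE1 u - u 0"
    unfolding e1_def e2_def e3_def idx_eq SE1_def SE2_def SE3_def
    by (simp add: esym_insert esym_zero esym_empty insert_Diff_if eval_nat_numeral; algebra)
  moreover have "e1 u 1 = SE1 u - u 1"
    unfolding e1_def e2_def e3_def idx_eq SE1_def SE2_def SE3_def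
    by (simp add: esym_insert esym_zero esym_empty insert_Diff_if eval_nat_numeral; algebra)
  moreover have "e1 u 2 = SE1 u - u 2"
    unfolding e1_def e2_def e3_def idx_eq SE1_def SE2_def SE3_def
    by (simp add: esym_insert esym_zero esym_empty insert_Diff_if eval_nat_numeral; algebra)
  moreover have "e1 u 3 = SE1 u - u 3"
    unfolding e1_def e2_def e3_def idx_eq SE1_def SE2_def SE3_def
    by (simp add: esym_insert esym_zero esym_empty insert_Diff_if eval_nat_numeral; algebra)
  moreover have "e1 u 4 = SE1 u - u 4"
    unfolding e1_def e2_def e3_def idx_eq SE1_def SE2_def SE3_def
    by (simp add: esym_insert esym_zero esym_empty insert_Diff_if eval_nat_numeral; algebra)
  ultimately show ?thesis by auto
qed

lemma e2_expl:
  assumes "(i::nat) < 5"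
  shows "e2 u i = SE2 u - u i * (SE1 u - u i)"
proof -
  have "i = 0 \<or> i = 1 \<or> i = 2 \<or> i = 3 \<or> i = 4" using assms by auto
  moreover have "e2 u 0 = SE2 u - u 0 * (SE1 u - u 0)"
    unfolding e1_def e2_def e3_def idx_eq SE1_def SE2_def SE3_def
    by (simp add: esym_insert esym_zero esym_empty insert_Diff_if eval_nat_numeral; algebra)
  moreover have "e2 u 1 = SE2 u - u 1 * (SE1 u - u 1)"
    unfolding e1_def e2_def e3_def idx_eq SE1_def SE2_def SE3_def
    by (simp add: esym_insert esym_zero esym_empty insert_Diff_if eval_nat_numeral; algebra)
  moreover have "e2 u 2 = SE2 u - u 2 * (SE1 u - u 2)"
    unfolding e1_def e2_def e3_def idx_eq SE1_def SE2_def SE3_def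
    by (simp add: esym_insert esym_zero esym_empty insert_Diff_if eval_nat_numeral; algebra)
  moreover have "e2 u 3 = SE2 u - u 3 * (SE1 u - u 3)"
    unfolding e1_def e2_def e3_def idx_eq SE1_def SE2_def SE3_def
    by (simp add: esym_insert esym_zero esym_empty insert_Diff_if eval_nat_numeral; algebra)
  moreover have "e2 u 4 = SE2 u - u 4 * (SE1 u - u 4)"
    unfolding e1_def e2_def e3_def idx_eq SE1_def SE2_def SE3_def
    by (simp add: esym_insert esym_zero esym_empty insert_Diff_if eval_nat_numeral; algebra)
  ultimately show ?thesis by auto
qed

lemma e3_expl:
  assumes "(i::nat) < 5"
  shows "e3 u i = SE3 u - u i * (SE2 u - u i * (SE1 u - u i))"
proof -
  have "i = 0 \<or> i = 1 \<or> i = 2 \<or> i = 3 \<or> i = 4" using assms by auto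
  moreover have "e3 u 0 = SE3 u - u 0 * (SE2 u - u 0 * (SE1 u - u 0))"
    unfolding e1_def e2_def e3_def idx_eq SE1_def SE2_def SE3_def
    by (simp add: esym_insert esym_zero esym_empty insert_Diff_if eval_nat_numeral; algebra)
  moreover have "e3 u 1 = SE3 u - u 1 * (SE2 u - u 1 * (SE1 u - u 1))"
    unfolding e1_def e2_def e3_def idx_eq SE1_def SE2_def SE3_def
    by (simp add: esym_insert esym_zero esym_empty insert_Diff_if eval_nat_numeral; algebra)
  moreover have "e3 u 2 = SE3 u - u 2 * (SE2 u - u 2 * (SE1 u - u 2))"
    unfolding e1_def e2_def e3_def idx_eq SE1_def SE2_def SE3_def
    by (simp add: esym_insert esym_zero esym_empty insert_Diff_if eval_nat_numeral; algebra)
  moreover have "e3 u 3 = SE3 u - u 3 * (SE2 u - u 3 * (SE1 u - u 3))"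
    unfolding e1_def e2_def e3_def idx_eq SE1_def SE2_def SE3_def
    by (simp add: esym_insert esym_zero esym_empty insert_Diff_if eval_nat_numeral; algebra)
  moreover have "e3 u 4 = SE3 u - u 4 * (SE2 u - u 4 * (SE1 u - u 4))"
    unfolding e1_def e2_def e3_def idx_eq SE1_def SE2_def SE3_def
    by (simp add: esym_insert esym_zero esym_empty insert_Diff_if eval_nat_numeral; algebra)
  ultimately show ?thesis by auto
qed

lemma e_expl:
  assumes "(i::nat) < 5"
  shows "e1 u i = SE1 u - u i \<and> e2 u i = SE2 u - u i * (SE1 u - u i) \<and>
         e3 u i = SE3 u - u i * (SE2 u - u i * (SE1 u - u i))"
  using e1_expl[OF assms] e2_expl[OF assms] e3_expl[OF assms] by simp

lemma nn_expl:
  assumes "(i::nat) < 5"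
  shows "nn u i = SE2 u * u i ^ 2 + (SE3 u - SE1 u * SE2 u) * u i + SE2 u ^ 2 - SE1 u * SE3 u"
  using e_expl[OF assms, of u] unfolding nn_def by algebra

lemma P_root:
  assumes "(i::nat) < 5"
  shows "u i ^ 5 = SE1 u * u i ^ 4 - SE2 u * u i ^ 3 + SE3 u * u i ^ 2 - SE4 u * u i + SE5 u"
proof -
  have "i = 0 \<or> i = 1 \<or> i = 2 \<or> i = 3 \<or> i = 4" using assms by auto
  moreover have "u 0 ^ 5 = SE1 u * u 0 ^ 4 - SE2 u * u 0 ^ 3 + SE3 u * u 0 ^ 2 - SE4 u * u 0 + SE5 u"
    unfolding SE1_def SE2_def SE3_def SE4_def SE5_def by algebra
  moreover have "u 1 ^ 5 = SE1 u * u 1 ^ 4 - SE2 u * u 1 ^ 3 + SE3 u * u 1 ^ 2 - SE4 u * u 1 + SE5 u"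
    unfolding SE1_def SE2_def SE3_def SE4_def SE5_def by algebra
  moreover have "u 2 ^ 5 = SE1 u * u 2 ^ 4 - SE2 u * u 2 ^ 3 + SE3 u * u 2 ^ 2 - SE4 u * u 2 + SE5 u"
    unfolding SE1_def SE2_def SE3_def SE4_def SE5_def by algebra
  moreover have "u 3 ^ 5 = SE1 u * u 3 ^ 4 - SE2 u * u 3 ^ 3 + SE3 u * u 3 ^ 2 - SE4 u * u 3 + SE5 u"
    unfolding SE1_def SE2_def SE3_def SE4_def SE5_def by algebra
  moreover have "u 4 ^ 5 = SE1 u * u 4 ^ 4 - SE2 u * u 4 ^ 3 + SE3 u * u 4 ^ 2 - SE4 u * u 4 + SE5 u"
    unfolding SE1_def SE2_def SE3_def SE4_def SE5_def by algebra
  ultimately show ?thesis by auto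
qed

lemma red4:
  fixes t E1 E2 E3 E4 E5 :: complex
  assumes "t ^ 5 = E1 * t ^ 4 - E2 * t ^ 3 + E3 * t ^ 2 - E4 * t + E5"
  shows "t^4 * (E2 * t ^ 2 + (E3 - E1 * E2) * t + E2 ^ 2 - E1 * E3)
     = E3 * E5 + (E2 * E5 - E3 * E4) * t + (E3^2 - E2 * E4) * t^2"
  using assms by algebra

lemma sum5: "(\<Sum>i<(5::nat). f i) = f 0 + f 1 + f 2 + f 3 + (f 4 :: complex)"
  by (simp add: eval_nat_numeral)

lemma Vsum: "m \<le> 3 \<Longrightarrow> (\<Sum>i<5. (-1)^i * dd u i * u i ^ m) = 0"
proof -
  assume "m \<le> 3"
  hence "m = 0 \<or> m = 1 \<or> m = 2 \<or> m = 3" by auto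
  moreover have eq: "(\<Sum>i<5. (-1)^i * dd u i * u i ^ m) =
    ((u 2 - u 1) * (u 3 - u 1) * (u 3 - u 2) * (u 4 - u 1) * (u 4 - u 2) * (u 4 - u 3)) * u 0^m
   - ((u 2 - u 0) * (u 3 - u 0) * (u 3 - u 2) * (u 4 - u 0) * (u 4 - u 2) * (u 4 - u 3)) * u 1^m
   + ((u 1 - u 0) * (u 3 - u 0) * (u 3 - u 1) * (u 4 - u 0) * (u 4 - u 1) * (u 4 - u 3)) * u 2^m
   - ((u 1 - u 0) * (u 2 - u 0) * (u 2 - u 1) * (u 4 - u 0) * (u 4 - u 1) * (u 4 - u 2)) * u 3^m
   + ((u 1 - u 0) * (u 2 - u 0) * (u 2 - u 1) * (u 3 - u 0) * (u 3 - u 1) * (u 3 - u 2)) * u 4^m" for m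
    by (simp only: sum5 dd_expl) simp
  ultimately show ?thesis
  proof (elim disjE)
    assume "m = 0" thus ?thesis unfolding eq by (simp only: V0)
  next
    assume "m = 1" thus ?thesis unfolding eq by (simp only: V1)
  next
    assume "m = 2" thus ?thesis unfolding eq by (simp only: V2)
  next
    assume "m = 3" thus ?thesis unfolding eq by (simp only: V3)
  qed
qed

lemma lin_comb:
  assumes "\<And>i. i < 5 \<Longrightarrow> f i = cA + cB * u i + cC * u i ^ 2 + cD * u i ^ 3"
  shows "(\<Sum>i<5. (-1)^i * dd u i * f i) = 0"
proof -
  have "(\<Sum>i<5. (-1)^i * dd u i * f i) = (\<Sum>i<5. cA * ((-1)^i * dd u i * u i ^ 0) + cB * ((-1)^i * dd u i * u i ^ 1)
     + cC * ((-1)^i * dd u i * u i ^ 2) + cD * ((-1)^i * dd u i * u i ^ 3))"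
    by (rule sum.cong[OF refl]) (simp add: assms algebra_simps)
  also have "\<dots> = cA * (\<Sum>i<5. (-1)^i * dd u i * u i ^ 0) + cB * (\<Sum>i<5. (-1)^i * dd u i * u i ^ 1)
     + cC * (\<Sum>i<5. (-1)^i * dd u i * u i ^ 2) + cD * (\<Sum>i<5. (-1)^i * dd u i * u i ^ 3)"
    by (simp only: sum.distrib sum_distrib_left)
  also have "\<dots> = 0" by (simp only: Vsum) simp
  finally show ?thesis .
qed

lemma MM_sum_zero:
  assumes "k = 0 \<or> k = 1 \<or> k = 4 \<or> k = 5"
  shows "(\<Sum>i<5. MM u i * u i ^ k) = 0"
proof -
  define E1 E2 E3 E4 E5 where "E1 = SE1 u" "E2 = SE2 u" "E3 = SE3 u" "E4 = SE4 u" "E5 = SE5 u"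
  define n where "n t = E2 * t ^ 2 + (E3 - E1 * E2) * t + E2 ^ 2 - E1 * E3" for t
  have nn: "nn u i = n (u i)" if "i < 5" for i using nn_expl[OF that] unfolding n_def E1_E2_E3_E4_E5_def by simp
  have r4: "u i ^ 4 * n (u i) = E3 * E5 + (E2 * E5 - E3 * E4) * u i + (E3^2 - E2 * E4) * u i^2" if "i < 5" for i
    unfolding n_def by (rule red4) (use P_root[OF that, of u] E1_E2_E3_E4_E5_def in simp)
  have r5: "u i ^ 5 * n (u i) = u i * (E3 * E5 + (E2 * E5 - E3 * E4) * u i + (E3^2 - E2 * E4) * u i^2)" if "i < 5" for i
  proof -
    have "u i ^ 5 * n (u i) = u i * (u i ^ 4 * n (u i))" by algebra
    thus ?thesis using r4[OF that] by simp
  qed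
  have S: "(\<Sum>i<5. MM u i * u i ^ k) = (\<Sum>i<5. (-1)^i * dd u i * (u i ^ k * n (u i)))"
    by (rule sum.cong[OF refl]) (simp add: MM_def nn)
  show ?thesis
    using assms
  proof (elim disjE)
    assume "k = 0"
    thus ?thesis unfolding S by (intro lin_comb[where cA="E2^2 - E1*E3" and cB="E3 - E1*E2" and cC=E2 and cD=0]) (simp add: n_def algebra_simps)
  next
    assume "k = 1"
    thus ?thesis unfolding S by (intro lin_comb[where cA=0 and cB="E2^2 - E1*E3" and cC="E3 - E1*E2" and cD=E2]) (simp add: n_def algebra_simps power2_eq_square power3_eq_cube)
  next
    assume "k = 4"
    thus ?thesis unfolding S by (intro lin_comb[where cA="E3 * E5" and cB="E2 * E5 - E3 * E4" and cC="E3^2 - E2 * E4" and cD=0]) (simp add: r4)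
  next
    assume "k = 5"
    show ?thesis unfolding S unfolding \<open>k=5\<close>
      by (intro lin_comb[where cA=0 and cB="E3 * E5" and cC="E2 * E5 - E3 * E4" and cD="E3^2 - E2 * E4"]) (simp only: r5; algebra)
  qed
qed




definition TT :: "(nat \<Rightarrow> complex) \<Rightarrow> (nat \<Rightarrow> complex) \<Rightarrow> nat \<Rightarrow> nat \<Rightarrow> complex" where
  "TT u l m n = (\<Sum>i\<in>idx. MM u i * u i ^ m * l i ^ n)"

lemma TT_SS: "delta u \<noteq> 0 \<Longrightarrow> TT u l m n = delta u * SS u l m n"
  unfolding TT_def SS_def by simp

lemma quint_exp: "quintic_on_plane u l x y z = 1 * z^5 * TT u l 0 5 + 5 * y * z^4 * TT u l 1 4 + 10 * y^2 * z^3 * TT u l 2 3 + 10 * y^3 * z^2 * TT u l 3 2 + 5 * y^4 * z * TT u l 4 1 + 1 * y^5 * TT u l 5 0 + 5 * x * z^4 * TT u l 0 4 + 20 * x * y * z^3 * TT u l 1 3 + 30 * x * y^2 * z^2 * TT u l 2 2 + 20 * x * y^3 * z * TT u l 3 1 + 5 * x * y^4 * TT u l 4 0 + 10 * x^2 * z^3 * TT u l 0 3 + 30 * x^2 * y * z^2 * TT u l 1 2 + 30 * x^2 * y^2 * z * TT u l 2 1 + 10 * x^2 * y^3 * TT u l 3 0 + 10 * x^3 * z^2 * TT u l 0 2 + 20 * x^3 * y * z * TT u l 1 1 + 10 * x^3 * y^2 * TT u l 2 0 + 5 * x^4 * z * TT u l 0 1 + 5 * x^4 * y * TT u l 1 0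 + 1 * x^5 * TT u l 0 0"
  unfolding quintic_on_plane_def TT_def idx_def sum5 by algebra

lemma cub_set: "{(a,b). a + b \<le> (3::nat)} = {(0,0),(0,1),(0,2),(0,3),(1,0),(1,1),(1,2),(2,0),(2,1),(3,0)}"
proof (rule set_eqI, rule iffI)
  fix p :: "nat \<times> nat" assume "p \<in> {(a,b). a + b \<le> 3}"
  then obtain a b where p: "p = (a,b)" "a + b \<le> 3" by auto
  hence a: "a = 0 \<or> a = 1 \<or> a = 2 \<or> a = 3" and b: "b = 0 \<or> b = 1 \<or> b = 2 \<or> b = 3" by arith+
  show "p \<in> {(0,0),(0,1),(0,2),(0,3),(1,0),(1,1),(1,2),(2,0),(2,1),(3,0)}"
    using a b p by (elim disjE) simp_all
next
  fix p :: "nat \<times> nat"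
  assume "p \<in> {(0,0),(0,1),(0,2),(0,3),(1,0),(1,1),(1,2),(2,0),(2,1),(3,0)}"
  thus "p \<in> {(a,b). a + b \<le> 3}" by auto
qed

lemma cub_exp: "cubic_form c x y z = c 0 0 * z^3 + c 0 1 * y * z^2 + c 0 2 * y^2 * z + c 0 3 * y^3 + c 1 0 * x * z^2 + c 1 1 * x * y * z + c 1 2 * x * y^2 + c 2 0 * x^2 * z + c 2 1 * x^2 * y + c 3 0 * x^3"
  unfolding cubic_form_def cub_set by (simp add: algebra_simps)

lemma coeff2:
  fixes h :: "nat \<Rightarrow> nat \<Rightarrow> complex"
  assumes "\<And>x y. (\<Sum>A\<le>5. (\<Sum>B\<le>5. h A B * y ^ B) * x ^ A) = 0"
  shows "A \<le> 5 \<Longrightarrow> B \<le> 5 \<Longrightarrow> h A B = 0"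
proof -
  assume AB: "A \<le> 5" "B \<le> 5"
  have "\<forall>y. (\<Sum>B\<le>5. h A B * y ^ B) = 0"
  proof
    fix y
    have "\<forall>x. (\<Sum>A\<le>5. (\<Sum>B\<le>5. h A B * y ^ B) * x ^ A) = 0" using assms by blast
    hence "\<forall>i\<le>5. (\<Sum>B\<le>5. h i B * y ^ B) = 0" by (rule polyfun_eq_0[THEN iffD1])
    thus "(\<Sum>B\<le>5. h A B * y ^ B) = 0" using AB by blast
  qed
  hence "\<forall>i\<le>5. h A i = 0" by (rule polyfun_eq_0[THEN iffD1])
  thus ?thesis using AB by blast
qed

definition hh where "hh u l c \<alpha> \<beta> d = [[(1 * TT u l 0 5 - d * c 0 0), (5 * TT u l 1 4 + \<alpha> * c 0 0 - d * c 0 1), (10 * TT u l 2 3 + \<alpha> * c 0 1 - d * c 0 2), (10 * TT u l 3 2 + \<alpha> * c 0 2 - d * c 0 3), (5 * TT u l 4 1 + \<alpha> * c 0 3), (1 * TT u l 5 0)],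
  [(5 * TT u l 0 4 + \<beta> * c 0 0 - d * c 1 0), (20 * TT u l 1 3 - c 0 0 + \<beta> * c 0 1 + \<alpha> * c 1 0 - d * c 1 1), (30 * TT u l 2 2 - c 0 1 + \<beta> * c 0 2 + \<alpha> * c 1 1 - d * c 1 2), (20 * TT u l 3 1 - c 0 2 + \<beta> * c 0 3 + \<alpha> * c 1 2), (5 * TT u l 4 0 - c 0 3), 0],
  [(10 * TT u l 0 3 + \<beta> * c 1 0 - d * c 2 0), (30 * TT u l 1 2 - c 1 0 + \<beta> * c 1 1 + \<alpha> * c 2 0 - d * c 2 1), (30 * TT u l 2 1 - c 1 1 + \<beta> * c 1 2 + \<alpha> * c 2 1), (10 * TT u l 3 0 - c 1 2), 0, 0],
  [(10 * TT u l 0 2 + \<beta> * c 2 0 - d * c 3 0), (20 * TT u l 1 1 - c 2 0 + \<beta> * c 2 1 + \<alpha> * c 3 0), (10 * TT u l 2 0 - c 2 1), 0, 0, 0],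
  [(5 * TT u l 0 1 + \<beta> * c 3 0), (5 * TT u l 1 0 - c 3 0), 0, 0, 0, 0],
  [(1 * TT u l 0 0), 0, 0, 0, 0, 0]]"

lemma h_exp: "quintic_on_plane u l x y 1 - conic d \<alpha> \<beta> x y 1 * cubic_form c x y 1
  = (\<Sum>A\<le>5. (\<Sum>B\<le>5. hh u l c \<alpha> \<beta> d ! A ! B * y ^ B) * x ^ A)"
  unfolding quint_exp cub_exp conic_def hh_def
  by (simp add: eval_nat_numeral atMost_Suc; algebra)




lemma delta_nz:
  assumes "\<And>i j. i < 5 \<Longrightarrow> j < 5 \<Longrightarrow> i \<noteq> j \<Longrightarrow> u i \<noteq> u j"
  shows "delta u \<noteq> 0"
  unfolding delta_def idx_def using assms by (auto simp: prod_zero_iff)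

lemma solve_neg: fixes a b e :: complex assumes "e = 0" "a - b = - e" shows "a = b"
  using assms by simp

lemma solve_pos: fixes a b e :: complex assumes "e = 0" "a - b = e" shows "a = b"
  using assms by simp

theorem mainTheorem5:
  fixes u l :: "nat \<Rightarrow> complex" and \<alpha> \<beta> :: complex
  assumes distinct: "\<And>i j. i < 5 \<Longrightarrow> j < 5 \<Longrightarrow> i \<noteq> j \<Longrightarrow> u i \<noteq> u j"
    and M_nonzero: "\<And>i. i < 5 \<Longrightarrow> MM u i \<noteq> 0"
    and R_in_plane1: "(\<Sum>i<5. MM u i * l i) = 0"
    and R_in_plane2: "(\<Sum>i<5. MM u i * u i ^ 4 * l i) = 0"
    and PQR_span: "\<And>a b c. (\<forall>i<5. a + b * u i + c * l i = 0) \<Longrightarrow> a = 0 \<and> b = 0 \<and> c = 0"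
    and alpha_eq: "SS u l 3 0 * \<alpha>^2 + 2 * SS u l 3 1 * \<alpha> + SS u l 3 2 = 0"
    and beta_eq: "SS u l 2 0 * \<beta>^2 + 2 * SS u l 1 1 * \<beta> + SS u l 0 2 = 0"
  shows "(\<exists>d c. cubic_form c 1 0 0 = 0 \<and> cubic_form c 0 1 0 = 0 \<and>
            (\<forall>x y z. quintic_on_plane u l x y z = conic d \<alpha> \<beta> x y z * cubic_form c x y z))
         \<longleftrightarrow> (\<exists>d. conic_eqns u l \<alpha> \<beta> d)"
proof -
  define D where "D = delta u"
  have D: "D \<noteq> 0" unfolding D_def by (rule delta_nz[OF distinct])
  have TS: "TT u l m n = D * SS u l m n" for m n unfolding D_def by (rule TT_SS[OF D[unfolded D_def]])
  show ?thesis
  proof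
    assume "\<exists>d c. cubic_form c 1 0 0 = 0 \<and> cubic_form c 0 1 0 = 0 \<and>
            (\<forall>x y z. quintic_on_plane u l x y z = conic d \<alpha> \<beta> x y z * cubic_form c x y z)"
    then obtain d c where c30: "cubic_form c 1 0 0 = 0" and c03: "cubic_form c 0 1 0 = 0"
      and fac: "\<And>x y z. quintic_on_plane u l x y z = conic d \<alpha> \<beta> x y z * cubic_form c x y z" by blast
    have c30': "c 3 0 = 0" using c30 unfolding cub_exp by simp
    have c03': "c 0 3 = 0" using c03 unfolding cub_exp by simp
    have "(\<Sum>A\<le>5. (\<Sum>B\<le>5. hh u l c \<alpha> \<beta> d ! A ! B * y ^ B) * x ^ A) = 0" for x y
      unfolding h_exp[symmetric] using fac[of x y 1] by simp
    note h = coeff2[of "\<lambda>A B. hh u l c \<alpha> \<beta> d ! A ! B", OF this]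
    have h32: "10 * TT u l 2 0 - c 2 1 = 0" using h[of 3 2] by (simp add: hh_def)
    have h23: "10 * TT u l 3 0 - c 1 2 = 0" using h[of 2 3] by (simp add: hh_def)
    have h31: "20 * TT u l 1 1 - c 2 0 + \<beta> * c 2 1 + \<alpha> * c 3 0 = 0" using h[of 3 1] by (simp add: hh_def)
    have h22: "30 * TT u l 2 1 - c 1 1 + \<beta> * c 1 2 + \<alpha> * c 2 1 = 0" using h[of 2 2] by (simp add: hh_def)
    have h13: "20 * TT u l 3 1 - c 0 2 + \<beta> * c 0 3 + \<alpha> * c 1 2 = 0" using h[of 1 3] by (simp add: hh_def)
    have h21: "30 * TT u l 1 2 - c 1 0 + \<beta> * c 1 1 + \<alpha> * c 2 0 - d * c 2 1 = 0" using h[of 2 1] by (simp add: hh_def)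
    have h12: "30 * TT u l 2 2 - c 0 1 + \<beta> * c 0 2 + \<alpha> * c 1 1 - d * c 1 2 = 0" using h[of 1 2] by (simp add: hh_def)
    have h20: "10 * TT u l 0 3 + \<beta> * c 1 0 - d * c 2 0 = 0" using h[of 2 0] by (simp add: hh_def)
    have h11: "20 * TT u l 1 3 - c 0 0 + \<beta> * c 0 1 + \<alpha> * c 1 0 - d * c 1 1 = 0" using h[of 1 1] by (simp add: hh_def)
    have h02: "10 * TT u l 2 3 + \<alpha> * c 0 1 - d * c 0 2 = 0" using h[of 0 2] by (simp add: hh_def)
    have h10: "5 * TT u l 0 4 + \<beta> * c 0 0 - d * c 1 0 = 0" using h[of 1 0] by (simp add: hh_def)
    have h01: "5 * TT u l 1 4 + \<alpha> * c 0 0 - d * c 0 1 = 0" using h[of 0 1] by (simp add: hh_def)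
    have h00: "1 * TT u l 0 5 - d * c 0 0 = 0" using h[of 0 0] by (simp add: hh_def)
    note hs = h32 h23 h31 h22 h13 h21 h12 h20 h11 h02 h10 h01 h00
    have k21: "c 2 1 = D * (10 * SS u l 2 0)"
      by (rule solve_neg[OF h32[unfolded TS]], (simp only: g3_def g2P_def g2Q_def g1P_def g1Q_def g1xy_def)?, algebra)
    have k12: "c 1 2 = D * (10 * SS u l 3 0)"
      by (rule solve_neg[OF h23[unfolded TS]], (simp only: g3_def g2P_def g2Q_def g1P_def g1Q_def g1xy_def)?, algebra)
    have k20: "c 2 0 = D * g1P u l \<alpha> \<beta>"
      by (rule solve_neg[OF h31[unfolded TS k21 c30']], (simp only: g3_def g2P_def g2Q_def g1P_def g1Q_def g1xy_def)?, algebra)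
    have k11: "c 1 1 = D * g1xy u l \<alpha> \<beta>"
      by (rule solve_neg[OF h22[unfolded TS k21 k12]], (simp only: g3_def g2P_def g2Q_def g1P_def g1Q_def g1xy_def)?, algebra)
    have k02: "c 0 2 = D * g1Q u l \<alpha> \<beta>"
      by (rule solve_neg[OF h13[unfolded TS k12 c03']], (simp only: g3_def g2P_def g2Q_def g1P_def g1Q_def g1xy_def)?, algebra)
    have k10: "c 1 0 = D * g2P u l \<alpha> \<beta> d"
      by (rule solve_neg[OF h21[unfolded TS k11 k20 k21]], (simp only: g3_def g2P_def g2Q_def g1P_def g1Q_def g1xy_def)?, algebra)
    have k01: "c 0 1 = D * g2Q u l \<alpha> \<beta> d"
      by (rule solve_neg[OF h12[unfolded TS k11 k02 k12]], (simp only: g3_def g2P_def g2Q_def g1P_def g1Q_def g1xy_def)?, algebra)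
    have k00: "c 0 0 = D * g3 u l \<alpha> \<beta> d"
      by (rule solve_neg[OF h11[unfolded TS k01 k10 k11]], (simp only: g3_def g2P_def g2Q_def g1P_def g1Q_def g1xy_def)?, algebra)
    have "D * (10 * SS u l 0 3 + \<beta> * g2P u l \<alpha> \<beta> d - g1P u l \<alpha> \<beta> * d) = 0"
      by (rule solve_pos[OF h20[unfolded TS k10 k20]], (simp only: g3_def g2P_def g2Q_def g1P_def g1Q_def g1xy_def)?, algebra)
    moreover have "D * (10 * SS u l 2 3 + \<alpha> * g2Q u l \<alpha> \<beta> d - g1Q u l \<alpha> \<beta> * d) = 0"
      by (rule solve_pos[OF h02[unfolded TS k01 k02]], (simp only: g3_def g2P_def g2Q_def g1P_def g1Q_def g1xy_def)?, algebra)
    moreover have "D * (5 * SS u l 0 4 + \<beta> * g3 u l \<alpha> \<beta> d - g2P u l \<alpha> \<beta> d * d) = 0"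
      by (rule solve_pos[OF h10[unfolded TS k00 k10]], (simp only: g3_def g2P_def g2Q_def g1P_def g1Q_def g1xy_def)?, algebra)
    moreover have "D * (5 * SS u l 1 4 + \<alpha> * g3 u l \<alpha> \<beta> d - g2Q u l \<alpha> \<beta> d * d) = 0"
      by (rule solve_pos[OF h01[unfolded TS k00 k01]], (simp only: g3_def g2P_def g2Q_def g1P_def g1Q_def g1xy_def)?, algebra)
    moreover have "D * (SS u l 0 5 - g3 u l \<alpha> \<beta> d * d) = 0"
      by (rule solve_pos[OF h00[unfolded TS k00]], (simp only: g3_def g2P_def g2Q_def g1P_def g1Q_def g1xy_def)?, algebra)
    ultimately have "conic_eqns u l \<alpha> \<beta> d" unfolding conic_eqns_def using D by simp
    thus "\<exists>d. conic_eqns u l \<alpha> \<beta> d" by blast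
  next
    assume "\<exists>d. conic_eqns u l \<alpha> \<beta> d"
    then obtain d where E: "conic_eqns u l \<alpha> \<beta> d" by blast
    define c where "c a b = D * (if a = 2 \<and> b = 1 then 10 * SS u l 2 0
       else if a = 1 \<and> b = 2 then 10 * SS u l 3 0
       else if a = 2 \<and> b = 0 then g1P u l \<alpha> \<beta>
       else if a = 1 \<and> b = 1 then g1xy u l \<alpha> \<beta>
       else if a = 0 \<and> b = 2 then g1Q u l \<alpha> \<beta>
       else if a = 1 \<and> b = 0 then g2P u l \<alpha> \<beta> d
       else if a = 0 \<and> b = 1 then g2Q u l \<alpha> \<beta> d
       else if a = 0 \<and> b = 0 then g3 u l \<alpha> \<beta> d else 0)" for a b :: nat
    have Z: "SS u l k 0 = 0" if "k = 0 \<or> k = 1 \<or> k = 4 \<or> k = 5" for k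
    proof -
      have "TT u l k 0 = 0" using MM_sum_zero[OF that, of u] unfolding TT_def idx_def by simp
      thus ?thesis using TS D by simp
    qed
    have Z01: "SS u l 0 1 = 0"
    proof -
      have "TT u l 0 1 = 0" using R_in_plane1 unfolding TT_def idx_def by simp
      thus ?thesis using TS D by simp
    qed
    have Z41: "SS u l 4 1 = 0"
    proof -
      have "TT u l 4 1 = 0" using R_in_plane2 unfolding TT_def idx_def by simp
      thus ?thesis using TS D by simp
    qed
    have Zs: "SS u l 0 0 = 0" "SS u l 1 0 = 0" "SS u l 4 0 = 0" "SS u l 5 0 = 0"
      using Z by auto
    have "cubic_form c 1 0 0 = 0" "cubic_form c 0 1 0 = 0" unfolding cub_exp c_def by simp_all
    moreover have "quintic_on_plane u l x y z = conic d \<alpha> \<beta> x y z * cubic_form c x y z" for x y z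
    proof -
      have cv: "c 2 1 = D * (10 * SS u l 2 0)" "c 1 2 = D * (10 * SS u l 3 0)"
        "c 2 0 = D * g1P u l \<alpha> \<beta>" "c 1 1 = D * g1xy u l \<alpha> \<beta>" "c 0 2 = D * g1Q u l \<alpha> \<beta>"
        "c 1 0 = D * g2P u l \<alpha> \<beta> d" "c 0 1 = D * g2Q u l \<alpha> \<beta> d" "c 0 0 = D * g3 u l \<alpha> \<beta> d"
        "c 3 0 = 0" "c 0 3 = 0" unfolding c_def by simp_all
      have key: "quintic_on_plane u l x y z - conic d \<alpha> \<beta> x y z * cubic_form c x y z =
        D * (10 * x^3 * z^2 * (SS u l 2 0 * \<beta>^2 + 2 * SS u l 1 1 * \<beta> + SS u l 0 2)
           + 10 * y^3 * z^2 * (SS u l 3 0 * \<alpha>^2 + 2 * SS u l 3 1 * \<alpha> + SS u l 3 2)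
           + x^2 * z^3 * (10 * SS u l 0 3 + \<beta> * g2P u l \<alpha> \<beta> d - g1P u l \<alpha> \<beta> * d)
           + y^2 * z^3 * (10 * SS u l 2 3 + \<alpha> * g2Q u l \<alpha> \<beta> d - g1Q u l \<alpha> \<beta> * d)
           + x * z^4 * (5 * SS u l 0 4 + \<beta> * g3 u l \<alpha> \<beta> d - g2P u l \<alpha> \<beta> d * d)
           + y * z^4 * (5 * SS u l 1 4 + \<alpha> * g3 u l \<alpha> \<beta> d - g2Q u l \<alpha> \<beta> d * d)
           + z^5 * (SS u l 0 5 - g3 u l \<alpha> \<beta> d * d))"
        unfolding quint_exp cub_exp cv conic_def TS Zs Z01 Z41 g3_def g2P_def g2Q_def g1P_def g1Q_def g1xy_def
        by algebra
      have "D * (10 * x^3 * z^2 * (SS u l 2 0 * \<beta>^2 + 2 * SS u l 1 1 * \<beta> + SS u l 0 2)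
           + 10 * y^3 * z^2 * (SS u l 3 0 * \<alpha>^2 + 2 * SS u l 3 1 * \<alpha> + SS u l 3 2)
           + x^2 * z^3 * (10 * SS u l 0 3 + \<beta> * g2P u l \<alpha> \<beta> d - g1P u l \<alpha> \<beta> * d)
           + y^2 * z^3 * (10 * SS u l 2 3 + \<alpha> * g2Q u l \<alpha> \<beta> d - g1Q u l \<alpha> \<beta> * d)
           + x * z^4 * (5 * SS u l 0 4 + \<beta> * g3 u l \<alpha> \<beta> d - g2P u l \<alpha> \<beta> d * d)
           + y * z^4 * (5 * SS u l 1 4 + \<alpha> * g3 u l \<alpha> \<beta> d - g2Q u l \<alpha> \<beta> d * d)
           + z^5 * (SS u l 0 5 - g3 u l \<alpha> \<beta> d * d)) = 0" (is "?Z = 0")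
      proof -
        have e: "10 * SS u l 0 3 + \<beta> * g2P u l \<alpha> \<beta> d - g1P u l \<alpha> \<beta> * d = 0"
          "10 * SS u l 2 3 + \<alpha> * g2Q u l \<alpha> \<beta> d - g1Q u l \<alpha> \<beta> * d = 0"
          "5 * SS u l 0 4 + \<beta> * g3 u l \<alpha> \<beta> d - g2P u l \<alpha> \<beta> d * d = 0"
          "5 * SS u l 1 4 + \<alpha> * g3 u l \<alpha> \<beta> d - g2Q u l \<alpha> \<beta> d * d = 0"
          "SS u l 0 5 - g3 u l \<alpha> \<beta> d * d = 0"
          using E unfolding conic_eqns_def by blast+
        show ?thesis by (simp only: e alpha_eq beta_eq mult_zero_right add_0_right)
      qed
      hence "quintic_on_plane u l x y z - conic d \<alpha> \<beta> x y z * cubic_form c x y z = 0"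
        by (simp only: key mult_zero_right)
      thus ?thesis by (simp only: right_minus_eq)
    qed
    ultimately show "\<exists>d c. cubic_form c 1 0 0 = 0 \<and> cubic_form c 0 1 0 = 0 \<and>
            (\<forall>x y z. quintic_on_plane u l x y z = conic d \<alpha> \<beta> x y z * cubic_form c x y z)" by blast
  qed
qed


end
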